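(* Let $\mathcal{Q}$ be a parabolic subset of $\mathcal{R}$, $\mathrm{s}$ an involution of $\mathcal{R}$, and $C$ a $V$-fit Weyl chamber for $(\mathcal{Q},\mathrm{s})$. Set $\Phi_C=\mathcal{B}(C)\cap\mathcal{Q}^n$ and $\Phi_C^{\mathrm{s},+}=\{\alpha\in\Phi_C\mid\mathrm{s}(\alpha)\in\mathcal{R}^+(C)\}$. Then $\mathcal{Q}_{\Phi_C^{\mathrm{s},+}}$ is the largest closed subset of $\mathcal{R}$ which contains $\mathcal{Q}$ and is contained in $\mathcal{Q}\cup\mathrm{s}(\mathcal{Q})$. Moreover the following are equivalent: (a) $(\mathcal{Q},\mathrm{s})$ is Levi-nondegenerate; (b) $\mathrm{s}(\Phi_C)\subseteq\mathcal{R}^+(C)$; (c) $\mathrm{s}(\Phi_C)\subseteq\mathcal{Q}^n$.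
   Context: $\mathcal{R}$ is a reduced root system in a Euclidean space $V$. Closed subset: $\alpha,\beta\in\mathcal{Q}$, $\alpha+\beta\in\mathcal{R}\Rightarrow\alpha+\beta\in\mathcal{Q}$; parabolic: closed with $\mathcal{Q}\cup(-\mathcal{Q})=\mathcal{R}$. $\mathcal{Q}^r=\{\alpha\in\mathcal{Q}\mid-\alpha\in\mathcal{Q}\}$, $\mathcal{Q}^n=\{\alpha\in\mathcal{Q}\mid-\alpha\notin\mathcal{Q}\}$. For a Weyl chamber $C$: $\mathcal{R}^\pm(C)$ positive/negative roots, $\mathcal{B}(C)$ simple roots, $\mathrm{supp}_C(\alpha)$ the set of simple roots with nonzero coefficient in $\alpha$. $C$ is admissible for $\mathcal{Q}$ if $\mathcal{R}^+(C)\subseteq\mathcal{Q}$. For $\Phi\subseteq\mathcal{B}(C)$, $\mathcal{Q}_\Phi=\mathcal{R}^+(C)\cup\{\alpha\in\mathcal{R}^-(C)\mid\mathrm{supp}_C(\alpha)\cap\Phi=\emptyset\}$. An involution of $\mathcal{R}$ is a linear isometric involution $\mathrm{s}$ of $V$ with $\mathrm{s}(\mathcal{R})=\mathcal{R}$; a root $\alpha$ is real if $\mathrm{s}(\alpha)=\alpha$, imaginary if $\mathrm{s}(\alpha)=-\alpha$, complex otherwise. An admissible chamber $C$ is $V$-fit for $(\mathcal{Q},\mathrm{s})$ if $\mathrm{s}(\alpha)\in\mathcal{R}^-(C)$ for every complex $\alpha\in\mathcal{B}(C)\setminus\Phi_C$. The pair $(\mathcal{Q},\mathrm{s})$ is Levi-nondegenerate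 if there is no parabolic $\mathcal{Q}'$ with $\mathcal{Q}\subsetneq\mathcal{Q}'\subseteq\mathcal{Q}\cup\mathrm{s}(\mathcal{Q})$. *)

theory Defs
  imports "HOL-Analysis.Analysis"
begin

definition reflection_along :: "'a::euclidean_space \<Rightarrow> 'a \<Rightarrow> 'a" where
  "reflection_along \<alpha> x = x - (2 * (x \<bullet> \<alpha>) / (\<alpha> \<bullet> \<alpha>)) *\<^sub>R \<alpha>"

definition root_system :: "'a::euclidean_space set \<Rightarrow> bool" where
  "root_system R \<longleftrightarrow>
     finite R \<and> 0 \<notin> R \<and> span R = UNIV \<and>
     (\<forall>\<alpha>\<in>R. reflection_along \<alpha> ` R = R) \<and>
     (\<forall>\<alpha>\<in>R. \<forall>\<beta>\<in>R. 2 * (\<beta> \<bullet> \<alpha>) / (\<alpha> \<bullet> \<alpha>) \<in> \<int>)"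

definition reduced_root_system :: "'a::euclidean_space set \<Rightarrow> bool" where
  "reduced_root_system R \<longleftrightarrow> root_system R \<and>
     (\<forall>\<alpha>\<in>R. \<forall>c::real. c *\<^sub>R \<alpha> \<in> R \<longrightarrow> c = 1 \<or> c = -1)"

definition closed_subset :: "'a::euclidean_space set \<Rightarrow> 'a set \<Rightarrow> bool" where
  "closed_subset R Q \<longleftrightarrow> Q \<subseteq> R \<and>
     (\<forall>\<alpha>\<in>Q. \<forall>\<beta>\<in>Q. \<alpha> + \<beta> \<in> R \<longrightarrow> \<alpha> + \<beta> \<in> Q)"

definition parabolic_subset :: "'a::euclidean_space set \<Rightarrow> 'a set \<Rightarrow> bool" where
  "parabolic_subset R Q \<longleftrightarrow> closed_subset R Q \<and> Q \<union> uminus ` Q = R"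

definition reductive_part :: "'a::euclidean_space set \<Rightarrow> 'a set" where
  "reductive_part Q = {\<alpha>\<in>Q. - \<alpha> \<in> Q}"

definition nilpotent_part :: "'a::euclidean_space set \<Rightarrow> 'a set" where
  "nilpotent_part Q = {\<alpha>\<in>Q. - \<alpha> \<notin> Q}"

definition weyl_chamber :: "'a::euclidean_space set \<Rightarrow> 'a set \<Rightarrow> bool" where
  "weyl_chamber R C \<longleftrightarrow> C \<in> components {x. \<forall>\<alpha>\<in>R. \<alpha> \<bullet> x \<noteq> 0}"

definition pos_roots :: "'a::euclidean_space set \<Rightarrow> 'a set \<Rightarrow> 'a set" where
  "pos_roots R C = {\<alpha>\<in>R. \<forall>x\<in>C. \<alpha> \<bullet> x > 0}"

definition neg_roots :: "'a::euclidean_space set \<Rightarrow> 'a set \<Rightarrow> 'a set" where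
  "neg_roots R C = {\<alpha>\<in>R. \<forall>x\<in>C. \<alpha> \<bullet> x < 0}"

definition simple_roots :: "'a::euclidean_space set \<Rightarrow> 'a set \<Rightarrow> 'a set" where
  "simple_roots R C = {\<alpha>\<in>pos_roots R C.
      \<not> (\<exists>\<beta>\<in>pos_roots R C. \<exists>\<gamma>\<in>pos_roots R C. \<alpha> = \<beta> + \<gamma>)}"

definition simple_coeffs :: "'a::euclidean_space set \<Rightarrow> 'a set \<Rightarrow> 'a \<Rightarrow> 'a \<Rightarrow> real" where
  "simple_coeffs R C \<alpha> = (THE c. (\<forall>\<beta>. \<beta> \<notin> simple_roots R C \<longrightarrow> c \<beta> = 0) \<and>
      \<alpha> = (\<Sum>\<beta>\<in>simple_roots R C. c \<beta> *\<^sub>R \<beta>))"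

definition supp :: "'a::euclidean_space set \<Rightarrow> 'a set \<Rightarrow> 'a \<Rightarrow> 'a set" where
  "supp R C \<alpha> = {\<beta>\<in>simple_roots R C. simple_coeffs R C \<alpha> \<beta> \<noteq> 0}"

definition admissible :: "'a::euclidean_space set \<Rightarrow> 'a set \<Rightarrow> 'a set \<Rightarrow> bool" where
  "admissible R Q C \<longleftrightarrow> weyl_chamber R C \<and> pos_roots R C \<subseteq> Q"

definition Q_Phi :: "'a::euclidean_space set \<Rightarrow> 'a set \<Rightarrow> 'a set \<Rightarrow> 'a set" where
  "Q_Phi R C \<Phi> = pos_roots R C \<union> {\<alpha>\<in>neg_roots R C. supp R C \<alpha> \<inter> \<Phi> = {}}"

definition root_involution :: "'a::euclidean_space set \<Rightarrow> ('a \<Rightarrow> 'a) \<Rightarrow> bool" where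
  "root_involution R s \<longleftrightarrow> linear s \<and> (\<forall>x. norm (s x) = norm x) \<and>
     (\<forall>x. s (s x) = x) \<and> s ` R = R"

definition real_root :: "('a::euclidean_space \<Rightarrow> 'a) \<Rightarrow> 'a \<Rightarrow> bool" where
  "real_root s \<alpha> \<longleftrightarrow> s \<alpha> = \<alpha>"

definition imaginary_root :: "('a::euclidean_space \<Rightarrow> 'a) \<Rightarrow> 'a \<Rightarrow> bool" where
  "imaginary_root s \<alpha> \<longleftrightarrow> s \<alpha> = - \<alpha>"

definition complex_root :: "('a::euclidean_space \<Rightarrow> 'a) \<Rightarrow> 'a \<Rightarrow> bool" where
  "complex_root s \<alpha> \<longleftrightarrow> \<not> real_root s \<alpha> \<and> \<not> imaginary_root s \<alpha>"

definition Phi_C :: "'a::euclidean_space set \<Rightarrow> 'a set \<Rightarrow> 'a set \<Rightarrow> 'a set" where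
  "Phi_C R Q C = simple_roots R C \<inter> nilpotent_part Q"

definition V_fit :: "'a::euclidean_space set \<Rightarrow> 'a set \<Rightarrow> ('a \<Rightarrow> 'a) \<Rightarrow> 'a set \<Rightarrow> bool" where
  "V_fit R Q s C \<longleftrightarrow> admissible R Q C \<and>
     (\<forall>\<alpha>\<in>simple_roots R C - Phi_C R Q C. complex_root s \<alpha> \<longrightarrow> s \<alpha> \<in> neg_roots R C)"

definition levi_nondegenerate :: "'a::euclidean_space set \<Rightarrow> 'a set \<Rightarrow> ('a \<Rightarrow> 'a) \<Rightarrow> bool" where
  "levi_nondegenerate R Q s \<longleftrightarrow>
     \<not> (\<exists>Q'. parabolic_subset R Q' \<and> Q \<subset> Q' \<and> Q' \<subseteq> Q \<union> s ` Q)"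

end

theory Submission
  imports Defs
begin

locale chamber =
  fixes R C :: "'a::euclidean_space set"
  assumes red: "reduced_root_system R" and wc: "weyl_chamber R C"
begin

abbreviation "P \<equiv> pos_roots R C"
abbreviation "N \<equiv> neg_roots R C"
abbreviation "B \<equiv> simple_roots R C"

definition x0 where "x0 = (SOME x. x \<in> C)"

lemma rs: "root_system R" using red by (simp add: reduced_root_system_def)
lemma finR: "finite R" using rs by (simp add: root_system_def)
lemma zero_notin: "0 \<notin> R" using rs by (simp add: root_system_def)
lemma refl_in: "\<alpha> \<in> R \<Longrightarrow> \<beta> \<in> R \<Longrightarrow> reflection_along \<alpha> \<beta> \<in> R"
  using rs unfolding root_system_def by blast
lemma int_in: "\<alpha> \<in> R \<Longrightarrow> \<beta> \<in> R \<Longrightarrow> 2 * (\<beta> \<bullet> \<alpha>) / (\<alpha> \<bullet> \<alpha>) \<in> \<int>"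
  using rs unfolding root_system_def by blast
lemma neg_in: assumes "\<alpha> \<in> R" shows "- \<alpha> \<in> R"
proof -
  have "\<alpha> \<bullet> \<alpha> \<noteq> 0" using assms zero_notin by auto
  then have "reflection_along \<alpha> \<alpha> = - \<alpha>"
    by (simp add: reflection_along_def algebra_simps scaleR_2)
  then show ?thesis using refl_in[OF assms assms] by simp
qed

lemma x0C: "x0 \<in> C"
proof -
  have "C \<noteq> {}" using wc in_components_nonempty unfolding weyl_chamber_def by blast
  then show ?thesis unfolding x0_def by (simp add: some_in_eq)
qed

lemma sign_const:
  assumes "\<alpha> \<in> R" "x \<in> C" "y \<in> C" "\<alpha> \<bullet> x > 0" shows "\<alpha> \<bullet> y > 0"
proof (rule ccontr)
  assume "\<not> \<alpha> \<bullet> y > 0"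
  then have "inner \<alpha> y \<le> 0" by simp
  moreover have "connected C" using wc in_components_connected unfolding weyl_chamber_def by blast
  ultimately obtain z where "z \<in> C" "inner \<alpha> z = 0"
    using connected_ivt_hyperplane[of C y x \<alpha> 0] assms by force
  moreover have "C \<subseteq> {x. \<forall>\<alpha>\<in>R. \<alpha> \<bullet> x \<noteq> 0}"
    using wc in_components_subset unfolding weyl_chamber_def by blast
  ultimately show False using assms(1) by blast
qed

lemma nonzero_x0: "\<alpha> \<in> R \<Longrightarrow> \<alpha> \<bullet> x0 \<noteq> 0"
  using wc in_components_subset x0C unfolding weyl_chamber_def by blast

lemma P_iff: "\<alpha> \<in> P \<longleftrightarrow> \<alpha> \<in> R \<and> \<alpha> \<bullet> x0 > 0"
  unfolding pos_roots_def using sign_const x0C by blast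

lemma N_iff: "\<alpha> \<in> N \<longleftrightarrow> \<alpha> \<in> R \<and> \<alpha> \<bullet> x0 < 0"
proof -
  have "\<alpha> \<in> R \<Longrightarrow> \<alpha> \<bullet> x0 < 0 \<Longrightarrow> x \<in> C \<Longrightarrow> \<alpha> \<bullet> x < 0" for x
    using sign_const[of "-\<alpha>" x0 x] neg_in x0C by auto
  then show ?thesis unfolding neg_roots_def using x0C by blast
qed

lemma PN: "\<alpha> \<in> R \<Longrightarrow> \<alpha> \<in> P \<or> \<alpha> \<in> N"
  using P_iff N_iff nonzero_x0 by force
lemma PN_disj: "\<alpha> \<in> P \<Longrightarrow> \<alpha> \<notin> N"
  using P_iff N_iff by auto
lemma N_negP: "\<alpha> \<in> N \<longleftrightarrow> - \<alpha> \<in> P"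
  using P_iff N_iff neg_in by force
lemma P_negN: "\<alpha> \<in> P \<longleftrightarrow> - \<alpha> \<in> N"
  using N_negP by simp
lemma PR: "P \<subseteq> R" unfolding pos_roots_def by auto
lemma NR: "N \<subseteq> R" unfolding neg_roots_def by auto
lemma BP: "B \<subseteq> P" unfolding simple_roots_def by auto

lemma string:
  assumes a: "\<alpha> \<in> R" and b: "\<beta> \<in> R" and pos: "\<alpha> \<bullet> \<beta> > 0" and ne: "\<alpha> \<noteq> \<beta>"
  shows "\<alpha> - \<beta> \<in> R"
proof -
  have aa: "\<alpha> \<bullet> \<alpha> > 0" using a zero_notin by (metis inner_gt_zero_iff)
  have bb: "\<beta> \<bullet> \<beta> > 0" using b zero_notin by (metis inner_gt_zero_iff)
  have le: "(\<alpha> \<bullet> \<beta>)^2 \<le> (\<alpha> \<bullet> \<alpha>) * (\<beta> \<bullet> \<beta>)" by (rule Cauchy_Schwarz_ineq)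
  have lt: "(\<alpha> \<bullet> \<beta>)^2 < (\<alpha> \<bullet> \<alpha>) * (\<beta> \<bullet> \<beta>)"
  proof (rule ccontr)
    assume "\<not> ?thesis"
    with le have eq: "(\<alpha> \<bullet> \<beta>)^2 = (\<alpha> \<bullet> \<alpha>) * (\<beta> \<bullet> \<beta>)" by simp
    define c where "c = (\<alpha> \<bullet> \<beta>) / (\<beta> \<bullet> \<beta>)"
    have "(\<alpha> - c *\<^sub>R \<beta>) \<bullet> (\<alpha> - c *\<^sub>R \<beta>) = \<alpha> \<bullet> \<alpha> - 2 * c * (\<alpha> \<bullet> \<beta>) + c^2 * (\<beta> \<bullet> \<beta>)"
      by (simp add: inner_diff_left inner_diff_right inner_commute power2_eq_square algebra_simps)
    also have "\<dots> = 0" using eq bb unfolding c_def by (simp add: field_simps power2_eq_square)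
    finally have "\<alpha> = c *\<^sub>R \<beta>" by simp
    moreover have "c > 0" using pos bb unfolding c_def by simp
    ultimately have "c = 1" using red b a unfolding reduced_root_system_def by force
    with \<open>\<alpha> = c *\<^sub>R \<beta>\<close> ne show False by simp
  qed
  define p where "p = 2 * (\<alpha> \<bullet> \<beta>) / (\<beta> \<bullet> \<beta>)"
  define q where "q = 2 * (\<beta> \<bullet> \<alpha>) / (\<alpha> \<bullet> \<alpha>)"
  have pI: "p \<in> \<int>" using int_in[OF b a] unfolding p_def .
  have qI: "q \<in> \<int>" using int_in[OF a b] unfolding q_def .
  have pq: "p * q < 4" using lt aa bb unfolding p_def q_def
    by (simp add: field_simps inner_commute power2_eq_square)
  have pp: "p > 0" "q > 0" using pos aa bb unfolding p_def q_def by (auto simp: inner_commute)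
  obtain ip iq where ip: "p = of_int ip" and iq: "q = of_int iq" using pI qI by (auto elim!: Ints_cases)
  have "ip \<ge> 1" "iq \<ge> 1" using pp ip iq by auto
  moreover have "ip * iq < 4" using pq ip iq by (metis of_int_less_iff of_int_mult of_int_numeral)
  ultimately have "ip = 1 \<or> iq = 1"
  proof -
    assume h: "1 \<le> ip" "1 \<le> iq" "ip * iq < 4"
    show ?thesis
    proof (rule ccontr)
      assume "\<not> ?thesis"
      then have "2 \<le> ip" "2 \<le> iq" using h by auto
      then have "2 * 2 \<le> ip * iq" by (intro mult_mono) auto
      then show False using h by simp
    qed
  qed
  then show ?thesis
  proof
    assume "ip = 1"
    have "reflection_along \<beta> \<alpha> = \<alpha> - p *\<^sub>R \<beta>" unfolding reflection_along_def p_def by simp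
    then have "reflection_along \<beta> \<alpha> = \<alpha> - \<beta>" using ip \<open>ip = 1\<close> by simp
    then show ?thesis using refl_in[OF b a] by simp
  next
    assume "iq = 1"
    have "reflection_along \<alpha> \<beta> = \<beta> - q *\<^sub>R \<alpha>" unfolding reflection_along_def q_def by simp
    then have "reflection_along \<alpha> \<beta> = \<beta> - \<alpha>" using iq \<open>iq = 1\<close> by simp
    then show ?thesis using neg_in refl_in[OF a b] by force
  qed
qed

lemma simple_inner:
  assumes a: "\<alpha> \<in> B" and b: "\<beta> \<in> B" and ne: "\<alpha> \<noteq> \<beta>"
  shows "\<alpha> \<bullet> \<beta> \<le> 0"
proof (rule ccontr)
  assume "\<not> ?thesis"
  then have pos: "\<alpha> \<bullet> \<beta> > 0" by simp
  have "\<alpha> \<in> R" "\<beta> \<in> R" using a b BP PR by auto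
  then have "\<alpha> - \<beta> \<in> R" using string pos ne by blast
  from PN[OF this] show False
  proof
    assume p: "\<alpha> - \<beta> \<in> P"
    have "\<alpha> = \<beta> + (\<alpha> - \<beta>)" by simp
    then show False using a b p BP unfolding simple_roots_def by blast
  next
    assume n: "\<alpha> - \<beta> \<in> N"
    then have "\<beta> - \<alpha> \<in> P" using N_negP by (metis minus_diff_eq)
    have "\<beta> = \<alpha> + (\<beta> - \<alpha>)" by simp
    then show False using a b \<open>\<beta> - \<alpha> \<in> P\<close> BP unfolding simple_roots_def by blast
  qed
qed

lemma card_lt:
  assumes "\<beta> \<bullet> x0 < \<gamma> \<bullet> x0" "\<beta> \<in> R"
  shows "card {\<delta>\<in>R. \<delta> \<bullet> x0 < \<beta> \<bullet> x0} < card {\<delta>\<in>R. \<delta> \<bullet> x0 < \<gamma> \<bullet> x0}"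
proof (rule psubset_card_mono)
  show "finite {\<delta>\<in>R. \<delta> \<bullet> x0 < \<gamma> \<bullet> x0}" using finR by simp
  show "{\<delta>\<in>R. \<delta> \<bullet> x0 < \<beta> \<bullet> x0} \<subset> {\<delta>\<in>R. \<delta> \<bullet> x0 < \<gamma> \<bullet> x0}"
    using assms by auto
qed

lemma pos_induct[consumes 1, case_names simple sum]:
  assumes "\<gamma> \<in> P"
    and "\<And>\<gamma>. \<gamma> \<in> B \<Longrightarrow> Pr \<gamma>"
    and "\<And>\<gamma> \<beta>1 \<beta>2. \<gamma> \<in> P \<Longrightarrow> \<beta>1 \<in> P \<Longrightarrow> \<beta>2 \<in> P \<Longrightarrow> \<gamma> = \<beta>1 + \<beta>2 \<Longrightarrow> Pr \<beta>1 \<Longrightarrow> Pr \<beta>2 \<Longrightarrow> Pr \<gamma>"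
  shows "Pr \<gamma>"
proof -
  have "\<forall>\<gamma>. \<gamma> \<in> P \<longrightarrow> card {\<delta>\<in>R. \<delta> \<bullet> x0 < \<gamma> \<bullet> x0} = n \<longrightarrow> Pr \<gamma>" for n
  proof (induction n rule: less_induct)
    case (less n)
    show ?case
    proof (intro allI impI)
      fix \<gamma> assume g: "\<gamma> \<in> P" and n: "card {\<delta>\<in>R. \<delta> \<bullet> x0 < \<gamma> \<bullet> x0} = n"
      show "Pr \<gamma>"
      proof (cases "\<gamma> \<in> B")
        case True then show ?thesis by (rule assms(2))
      next
        case False
        then obtain \<beta>1 \<beta>2 where b: "\<beta>1 \<in> P" "\<beta>2 \<in> P" "\<gamma> = \<beta>1 + \<beta>2"
          using g unfolding simple_roots_def by auto
        have "\<beta>1 \<bullet> x0 < \<gamma> \<bullet> x0" "\<beta>2 \<bullet> x0 < \<gamma> \<bullet> x0"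
          using b P_iff by (auto simp: inner_add_left)
        then have "card {\<delta>\<in>R. \<delta> \<bullet> x0 < \<beta>1 \<bullet> x0} < n" "card {\<delta>\<in>R. \<delta> \<bullet> x0 < \<beta>2 \<bullet> x0} < n"
          using card_lt b PR n by auto
        then have "Pr \<beta>1" "Pr \<beta>2" using less b by blast+
        then show ?thesis using assms(3) g b by blast
      qed
    qed
  qed
  then show ?thesis using assms(1) by blast
qed

lemma finB: "finite B" using BP PR finR finite_subset by blast

lemma R_span: "R \<subseteq> span B"
proof -
  have P: "\<gamma> \<in> span B" if "\<gamma> \<in> P" for \<gamma>
    using that
  proof (induction rule: pos_induct)
    case (simple \<gamma>) then show ?case by (rule span_base)
  next
    case (sum \<gamma> \<beta>1 \<beta>2) then show ?case by (simp add: span_add)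
  qed
  show ?thesis
  proof
    fix \<gamma> assume "\<gamma> \<in> R"
    from PN[OF this] show "\<gamma> \<in> span B"
    proof
      assume p: "\<gamma> \<in> P" then show ?thesis by (rule P)
    next
      assume n: "\<gamma> \<in> N"
      then have "- \<gamma> \<in> span B" using P N_negP by blast
      then show ?thesis using span_neg by fastforce
    qed
  qed
qed

lemma span_B: "span B = UNIV"
proof -
  have "span R \<subseteq> span B" using R_span by (metis span_mono span_span)
  then show ?thesis using rs unfolding root_system_def by auto
qed

lemma indepB: "independent B"
proof
  assume "dependent B"
  then obtain u v where v: "v \<in> B" "u v \<noteq> 0" and s0: "(\<Sum>v\<in>B. u v *\<^sub>R v) = 0"
    using dependent_finite[OF finB] by blast
  define Bp where "Bp = {\<beta>\<in>B. u \<beta> > 0}"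
  define Bn where "Bn = {\<beta>\<in>B. u \<beta> < 0}"
  have fin: "finite Bp" "finite Bn" using finB unfolding Bp_def Bn_def by auto
  have disj: "Bp \<inter> Bn = {}" unfolding Bp_def Bn_def by auto
  have "(\<Sum>v\<in>B. u v *\<^sub>R v) = (\<Sum>v\<in>Bp \<union> Bn. u v *\<^sub>R v)"
    by (rule sum.mono_neutral_right[OF finB]) (auto simp: Bp_def Bn_def)
  also have "\<dots> = (\<Sum>v\<in>Bp. u v *\<^sub>R v) + (\<Sum>v\<in>Bn. u v *\<^sub>R v)"
    by (rule sum.union_disjoint[OF fin disj])
  finally have split: "(\<Sum>v\<in>Bp. u v *\<^sub>R v) = (\<Sum>v\<in>Bn. (- u v) *\<^sub>R v)"
    using s0 by (simp add: sum_negf eq_neg_iff_add_eq_0)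
  define w where "w = (\<Sum>v\<in>Bp. u v *\<^sub>R v)"
  have "w \<bullet> w = (\<Sum>v\<in>Bp. u v *\<^sub>R v) \<bullet> (\<Sum>v\<in>Bn. (- u v) *\<^sub>R v)"
    using split w_def by simp
  also have "\<dots> = (\<Sum>b\<in>Bn. \<Sum>a\<in>Bp. (u a *\<^sub>R a) \<bullet> ((- u b) *\<^sub>R b))"
    by (simp only: inner_sum_left inner_sum_right)
  also have "\<dots> = (\<Sum>b\<in>Bn. \<Sum>a\<in>Bp. (u a * (- u b)) * (a \<bullet> b))"
    by (intro sum.cong refl) (simp add: algebra_simps)
  also have "\<dots> \<le> 0"
  proof (intro sum_nonpos)
    fix b a assume b: "b \<in> Bn" and a: "a \<in> Bp"
    have "a \<noteq> b" using a b disj by auto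
    then have "a \<bullet> b \<le> 0" using simple_inner a b unfolding Bp_def Bn_def by auto
    moreover have "u a > 0" "- u b > 0" using a b unfolding Bp_def Bn_def by auto
    then have "u a * (- u b) > 0" by (rule mult_pos_pos)
    ultimately show "u a * (- u b) * (a \<bullet> b) \<le> 0" by (intro mult_nonneg_nonpos) auto
  qed
  finally have "w \<bullet> w \<le> 0" .
  then have w0: "w = 0" by (metis inner_gt_zero_iff not_le)
  have Bp0: "Bp = {}"
  proof (rule ccontr)
    assume ne: "Bp \<noteq> {}"
    have "w \<bullet> x0 = (\<Sum>a\<in>Bp. u a * (a \<bullet> x0))" unfolding w_def by (simp add: inner_sum_left)
    also have "\<dots> > 0"
    proof (rule sum_pos[OF fin(1) ne])
      fix i assume "i \<in> Bp"
      then have "u i > 0" "i \<bullet> x0 > 0" using P_iff BP unfolding Bp_def by auto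
      then show "u i * (i \<bullet> x0) > 0" by (rule mult_pos_pos)
    qed
    finally show False using w0 by simp
  qed
  have Bn0: "Bn = {}"
  proof (rule ccontr)
    assume ne: "Bn \<noteq> {}"
    have "w \<bullet> x0 = (\<Sum>a\<in>Bn. (- u a) * (a \<bullet> x0))" unfolding split w_def by (simp add: inner_sum_left)
    also have "\<dots> > 0"
    proof (rule sum_pos[OF fin(2) ne])
      fix i assume "i \<in> Bn"
      then have "- u i > 0" "i \<bullet> x0 > 0" using P_iff BP unfolding Bn_def by auto
      then show "(- u i) * (i \<bullet> x0) > 0" by (rule mult_pos_pos)
    qed
    finally show False using w0 by simp
  qed
  from v Bp0 Bn0 show False unfolding Bp_def Bn_def by (auto simp: neq_iff)
qed

definition co where "co v = representation B v"

lemma co_add: "co (u + v) b = co u b + co v b"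
  unfolding co_def using representation_add[OF indepB] span_B by simp
lemma co_neg: "co (- v) b = - co v b"
  unfolding co_def using representation_neg[OF indepB] span_B by simp
lemma co_basis: "a \<in> B \<Longrightarrow> co a b = (if b = a then 1 else 0)"
  unfolding co_def using representation_basis[OF indepB] by simp
lemma co_ne: "co v b \<noteq> 0 \<Longrightarrow> b \<in> B"
  unfolding co_def using representation_ne_zero by blast
lemma co_P: "\<gamma> \<in> P \<Longrightarrow> co \<gamma> b \<ge> 0"
proof (induction rule: pos_induct)
  case (simple \<gamma>) then show ?case by (simp add: co_basis)
next
  case (sum \<gamma> \<beta>1 \<beta>2) then show ?case by (simp add: co_add)
qed
lemma co_N: "\<gamma> \<in> N \<Longrightarrow> co \<gamma> b \<le> 0"
  using co_P[of "-\<gamma>" b] N_negP co_neg by fastforce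

lemma simple_coeffs_eq: "simple_coeffs R C v = co v"
  unfolding simple_coeffs_def
proof (rule the_equality)
  show "(\<forall>\<beta>. \<beta> \<notin> B \<longrightarrow> co v \<beta> = 0) \<and> v = (\<Sum>\<beta>\<in>B. co v \<beta> *\<^sub>R \<beta>)"
    using co_ne sum_representation_eq[OF indepB _ finB subset_refl, of v] span_B
    unfolding co_def by auto
next
  fix c assume c: "(\<forall>\<beta>. \<beta> \<notin> B \<longrightarrow> c \<beta> = 0) \<and> v = (\<Sum>\<beta>\<in>B. c \<beta> *\<^sub>R \<beta>)"
  have sub: "{b. c b \<noteq> 0} \<subseteq> B" using c by auto
  show "c = co v" unfolding co_def
  proof (rule sym, rule representation_eqI[OF indepB])
    show "v \<in> span B" using span_B by simp
    show "c b \<noteq> 0 \<Longrightarrow> b \<in> B" for b using c by auto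
    show "finite {b. c b \<noteq> 0}" using sub finB finite_subset by blast
    have "(\<Sum>b | c b \<noteq> 0. c b *\<^sub>R b) = (\<Sum>\<beta>\<in>B. c \<beta> *\<^sub>R \<beta>)"
      by (rule sum.mono_neutral_left[OF finB sub]) auto
    then show "(\<Sum>b | c b \<noteq> 0. c b *\<^sub>R b) = v" using c by simp
  qed
qed

lemma supp_eq: "supp R C \<alpha> = {\<beta>\<in>B. co \<alpha> \<beta> \<noteq> 0}"
  unfolding supp_def simple_coeffs_eq ..

end

locale thm_setup = chamber R C for R C :: "'a::euclidean_space set" +
  fixes Q :: "'a set" and s :: "'a \<Rightarrow> 'a"
  assumes parQ: "parabolic_subset R Q" and inv: "root_involution R s" and vfit: "V_fit R Q s C"
begin

abbreviation "\<Phi> \<equiv> Phi_C R Q C"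
abbreviation "\<Phi>s \<equiv> {\<alpha>\<in>Phi_C R Q C. s \<alpha> \<in> pos_roots R C}"

lemma Qcl: "closed_subset R Q" using parQ by (simp add: parabolic_subset_def)
lemma QR: "Q \<subseteq> R" using Qcl by (simp add: closed_subset_def)
lemma PQ: "P \<subseteq> Q" using vfit by (simp add: V_fit_def admissible_def)
lemma lin: "linear s" using inv by (simp add: root_involution_def)
lemma ss: "s (s x) = x" using inv by (simp add: root_involution_def)
lemma sR: "\<alpha> \<in> R \<Longrightarrow> s \<alpha> \<in> R" using inv by (auto simp: root_involution_def)
lemma s_add: "s (x + y) = s x + s y" using lin by (simp add: linear_add)
lemma s_neg: "s (- x) = - s x" using lin by (simp add: linear_neg)
lemma Phi_iff: "\<phi> \<in> \<Phi> \<longleftrightarrow> \<phi> \<in> B \<and> \<phi> \<in> Q \<and> - \<phi> \<notin> Q"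
  by (auto simp: Phi_C_def nilpotent_part_def)

lemma closedD: "closed_subset R Q' \<Longrightarrow> a \<in> Q' \<Longrightarrow> b \<in> Q' \<Longrightarrow> a + b \<in> R \<Longrightarrow> a + b \<in> Q'"
  by (auto simp: closed_subset_def)

lemma G:
  assumes cl: "closed_subset R Q'" and PQ': "P \<subseteq> Q'" and g: "\<gamma> \<in> P"
  shows "- \<gamma> \<in> Q' \<Longrightarrow> co \<gamma> \<beta> \<noteq> 0 \<Longrightarrow> - \<beta> \<in> Q'"
  using g
proof (induction arbitrary: \<beta> rule: pos_induct)
  case (simple \<gamma>)
  then have "\<beta> = \<gamma>" by (simp add: co_basis split: if_splits)
  then show ?case using simple by simp
next
  case (sum \<gamma> \<beta>1 \<beta>2)
  have r: "- \<beta>1 \<in> R" "- \<beta>2 \<in> R" using sum.hyps PR neg_in by auto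
  have "- \<gamma> + \<beta>1 = - \<beta>2" "- \<gamma> + \<beta>2 = - \<beta>1" using sum.hyps by (auto simp: algebra_simps)
  then have m: "- \<beta>2 \<in> Q'" "- \<beta>1 \<in> Q'"
    using closedD[OF cl, of "- \<gamma>"] sum.prems sum.hyps PQ' r by (metis subsetD)+
  have "co \<beta>1 \<beta> \<noteq> 0 \<or> co \<beta>2 \<beta> \<noteq> 0" using sum.prems sum.hyps co_add by auto
  then show ?case using sum.IH m by blast
qed

lemma B_neg:
  assumes "\<alpha> \<in> Q" "\<alpha> \<in> N" "\<beta> \<in> \<Phi>" shows "co \<alpha> \<beta> = 0"
proof (rule ccontr)
  assume "co \<alpha> \<beta> \<noteq> 0"
  then have "co (- \<alpha>) \<beta> \<noteq> 0" by (simp add: co_neg)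
  moreover have "- \<alpha> \<in> P" using assms N_negP by blast
  ultimately have "- \<beta> \<in> Q" using G[OF Qcl PQ, of "- \<alpha>" \<beta>] assms by simp
  then show False using assms Phi_iff by blast
qed

lemma B':
  assumes "\<gamma> \<in> P" shows "(\<forall>\<beta>\<in>\<Phi>. co \<gamma> \<beta> = 0) \<Longrightarrow> - \<gamma> \<in> Q"
  using assms
proof (induction rule: pos_induct)
  case (simple \<gamma>)
  then have "\<gamma> \<notin> \<Phi>" by (auto simp: co_basis)
  moreover have "\<gamma> \<in> Q" using simple BP PQ by auto
  ultimately show ?case using simple Phi_iff by blast
next
  case (sum \<gamma> \<beta>1 \<beta>2)
  have "\<forall>\<beta>\<in>\<Phi>. co \<beta>1 \<beta> = 0" "\<forall>\<beta>\<in>\<Phi>. co \<beta>2 \<beta> = 0"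
    using sum.prems sum.hyps co_add co_P
    by (metis add_nonneg_eq_0_iff)+
  then have "- \<beta>1 \<in> Q" "- \<beta>2 \<in> Q" using sum.IH by auto
  moreover have "- \<beta>1 + - \<beta>2 = - \<gamma>" using sum.hyps by simp
  moreover have "- \<gamma> \<in> R" using neg_in[of \<gamma>] sum.hyps(1) PR by blast
  ultimately show ?case using closedD[OF Qcl] by metis
qed

lemma QPhi_iff: "\<alpha> \<in> Q_Phi R C \<Psi> \<longleftrightarrow> \<alpha> \<in> P \<or> (\<alpha> \<in> N \<and> (\<forall>\<psi>\<in>\<Psi>. co \<alpha> \<psi> = 0))"
  unfolding Q_Phi_def supp_eq using co_ne by blast

lemma QPhi_R: "Q_Phi R C \<Psi> \<subseteq> R" using QPhi_iff PR NR by blast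

lemma QPhi_closed: "closed_subset R (Q_Phi R C \<Psi>)"
  unfolding closed_subset_def
proof (intro conjI QPhi_R ballI impI)
  fix a b assume a: "a \<in> Q_Phi R C \<Psi>" and b: "b \<in> Q_Phi R C \<Psi>" and ab: "a + b \<in> R"
  have ca: "co a \<psi> \<ge> 0" if "\<psi> \<in> \<Psi>" for \<psi> using a that QPhi_iff co_P by fastforce
  have cb: "co b \<psi> \<ge> 0" if "\<psi> \<in> \<Psi>" for \<psi> using b that QPhi_iff co_P by fastforce
  from PN[OF ab] show "a + b \<in> Q_Phi R C \<Psi>"
  proof
    assume "a + b \<in> P" then show ?thesis using QPhi_iff by blast
  next
    assume n: "a + b \<in> N"
    have "co (a + b) \<psi> = 0" if "\<psi> \<in> \<Psi>" for \<psi>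
      using co_N[OF n, of \<psi>] ca[OF that] cb[OF that] co_add by simp
    then show ?thesis using QPhi_iff n by blast
  qed
qed

lemma K2:
  assumes phi: "\<phi> \<in> \<Phi>" and b: "\<beta> \<in> B" and nb: "\<beta> \<notin> \<Phi>s"
  shows "co (s \<beta>) \<phi> \<le> 0"
proof -
  have bR: "\<beta> \<in> R" using b BP PR by auto
  then have sbR: "s \<beta> \<in> R" by (rule sR)
  show ?thesis
  proof (cases "\<beta> \<in> \<Phi>")
    case True
    then have "s \<beta> \<notin> P" using nb by blast
    then have "s \<beta> \<in> N" using PN sbR by blast
    then show ?thesis by (rule co_N)
  next
    case False
    have ne: "\<phi> \<noteq> \<beta>" using False phi by auto
    show ?thesis
    proof (cases "complex_root s \<beta>")
      case True
      then have "s \<beta> \<in> N" using vfit b False unfolding V_fit_def by blast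
      then show ?thesis by (rule co_N)
    next
      case False
      then have "s \<beta> = \<beta> \<or> s \<beta> = - \<beta>"
        unfolding complex_root_def real_root_def imaginary_root_def by blast
      then show ?thesis using ne co_basis[OF b, of \<phi>] co_neg by auto
    qed
  qed
qed

lemma K:
  assumes "\<delta> \<in> P"
  shows "(\<forall>\<beta>. co \<delta> \<beta> \<noteq> 0 \<longrightarrow> co (s \<beta>) \<phi> \<le> 0) \<Longrightarrow> co (s \<delta>) \<phi> \<le> 0"
  using assms
proof (induction rule: pos_induct)
  case (simple \<gamma>)
  then show ?case by (auto simp: co_basis)
next
  case (sum \<gamma> \<beta>1 \<beta>2)
  have "\<forall>\<beta>. co \<beta>1 \<beta> \<noteq> 0 \<longrightarrow> co (s \<beta>) \<phi> \<le> 0" "\<forall>\<beta>. co \<beta>2 \<beta> \<noteq> 0 \<longrightarrow> co (s \<beta>) \<phi> \<le> 0"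
    using sum.prems sum.hyps co_add co_P by (metis add_nonneg_eq_0_iff)+
  then have "co (s \<beta>1) \<phi> \<le> 0" "co (s \<beta>2) \<phi> \<le> 0" using sum.IH by auto
  then show ?case using sum.hyps s_add co_add by simp
qed

lemma M:
  assumes phi: "\<phi> \<in> \<Phi>" and sp: "s \<phi> \<in> P" shows "- s \<phi> \<notin> Q"
proof
  assume q: "- s \<phi> \<in> Q"
  have n: "- s \<phi> \<in> N" using sp P_negN by blast
  have z: "co (s \<phi>) \<beta> = 0" if "\<beta> \<in> \<Phi>" for \<beta>
    using B_neg[OF q n that] co_neg by simp
  have "co (s (s \<phi>)) \<phi> \<le> 0"
  proof (rule K[OF sp], intro allI impI)
    fix \<beta> assume "co (s \<phi>) \<beta> \<noteq> 0"
    then have "\<beta> \<in> B" "\<beta> \<notin> \<Phi>s" using co_ne z by auto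
    then show "co (s \<beta>) \<phi> \<le> 0" using K2 phi by blast
  qed
  moreover have "\<phi> \<in> B" using phi Phi_iff by blast
  ultimately show False by (simp add: ss co_basis)
qed

lemma part3: "Q_Phi R C \<Phi>s \<subseteq> Q \<union> s ` Q"
proof
  fix \<alpha> assume a: "\<alpha> \<in> Q_Phi R C \<Phi>s"
  show "\<alpha> \<in> Q \<union> s ` Q"
  proof (cases "\<alpha> \<in> P")
    case True then show ?thesis using PQ by blast
  next
    case False
    then have n: "\<alpha> \<in> N" and z: "\<forall>\<psi>\<in>\<Phi>s. co \<alpha> \<psi> = 0" using a QPhi_iff by auto
    define \<gamma> where "\<gamma> = - \<alpha>"
    have g: "\<gamma> \<in> P" using n N_negP \<gamma>_def by blast
    have le: "co (s \<gamma>) \<phi> \<le> 0" if phi: "\<phi> \<in> \<Phi>" for \<phi>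
    proof (rule K[OF g], intro allI impI)
      fix \<beta> assume "co \<gamma> \<beta> \<noteq> 0"
      then have "\<beta> \<in> B" "\<beta> \<notin> \<Phi>s" using co_ne z co_neg \<gamma>_def by auto
      then show "co (s \<beta>) \<phi> \<le> 0" using K2 phi by blast
    qed
    have sgR: "s \<gamma> \<in> R" using g PR sR by auto
    have "- s \<gamma> \<in> Q"
    proof (cases "s \<gamma> \<in> P")
      case True
      then have "\<forall>\<beta>\<in>\<Phi>. co (s \<gamma>) \<beta> = 0" using le co_P by (meson order_antisym)
      then show ?thesis using B' True by blast
    next
      case False
      then have "s \<gamma> \<in> N" using PN sgR by blast
      then show ?thesis using N_negP PQ by blast
    qed
    moreover have "s (- s \<gamma>) = \<alpha>" using \<gamma>_def s_neg ss by simp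
    ultimately show ?thesis by (metis UnI2 image_eqI)
  qed
qed

lemma part4:
  assumes cl: "closed_subset R Q'" and sub: "Q \<subseteq> Q'" and sup: "Q' \<subseteq> Q \<union> s ` Q"
  shows "Q' \<subseteq> Q_Phi R C \<Phi>s"
proof
  fix \<alpha> assume a: "\<alpha> \<in> Q'"
  have aR: "\<alpha> \<in> R" using a cl by (auto simp: closed_subset_def)
  from PN[OF aR] show "\<alpha> \<in> Q_Phi R C \<Phi>s"
  proof
    assume "\<alpha> \<in> P" then show ?thesis using QPhi_iff by blast
  next
    assume n: "\<alpha> \<in> N"
    have "co \<alpha> \<phi> = 0" if phi: "\<phi> \<in> \<Phi>s" for \<phi>
    proof (rule ccontr)
      assume "co \<alpha> \<phi> \<noteq> 0"
      then have "co (- \<alpha>) \<phi> \<noteq> 0" by (simp add: co_neg)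
      moreover have "- \<alpha> \<in> P" using n N_negP by blast
      ultimately have m: "- \<phi> \<in> Q'" using G[OF cl _, of "- \<alpha>" \<phi>] PQ sub a by auto
      have "- \<phi> \<notin> Q" using phi Phi_iff by blast
      then obtain q where q: "q \<in> Q" "- \<phi> = s q" using m sup by blast
      then have "q = - s \<phi>" using ss s_neg by (metis)
      then show False using M phi q by blast
    qed
    then show ?thesis using QPhi_iff n by blast
  qed
qed

lemma part1: "Q \<subseteq> Q_Phi R C \<Phi>s"
proof
  fix \<alpha> assume a: "\<alpha> \<in> Q"
  then have "\<alpha> \<in> R" using QR by blast
  from PN[OF this] show "\<alpha> \<in> Q_Phi R C \<Phi>s"
  proof
    assume "\<alpha> \<in> P" then show ?thesis using QPhi_iff by blast
  next
    assume n: "\<alpha> \<in> N"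
    then show ?thesis using QPhi_iff B_neg[OF a n] by blast
  qed
qed

lemma QPhi_sub: "Q_Phi R C \<Phi> \<subseteq> Q"
proof
  fix \<alpha> assume a: "\<alpha> \<in> Q_Phi R C \<Phi>"
  show "\<alpha> \<in> Q"
  proof (cases "\<alpha> \<in> P")
    case True then show ?thesis using PQ by blast
  next
    case False
    then have n: "\<alpha> \<in> N" and z: "\<forall>\<psi>\<in>\<Phi>. co \<alpha> \<psi> = 0" using a QPhi_iff by auto
    have "- \<alpha> \<in> P" using n N_negP by blast
    moreover have "\<forall>\<psi>\<in>\<Phi>. co (- \<alpha>) \<psi> = 0" using z co_neg by simp
    ultimately show ?thesis using B' by fastforce
  qed
qed

lemma part5: "levi_nondegenerate R Q s \<longleftrightarrow> s ` \<Phi> \<subseteq> P"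
proof
  assume lev: "levi_nondegenerate R Q s"
  show "s ` \<Phi> \<subseteq> P"
  proof (rule ccontr)
    assume "\<not> ?thesis"
    then obtain \<phi> where phi: "\<phi> \<in> \<Phi>" "s \<phi> \<notin> P" by blast
    let ?Q' = "Q_Phi R C \<Phi>s"
    have par: "parabolic_subset R ?Q'"
      unfolding parabolic_subset_def
    proof (intro conjI QPhi_closed)
      show "?Q' \<union> uminus ` ?Q' = R"
      proof
        show "?Q' \<union> uminus ` ?Q' \<subseteq> R" using QPhi_R neg_in by auto
        show "R \<subseteq> ?Q' \<union> uminus ` ?Q'"
        proof
          fix \<alpha> assume "\<alpha> \<in> R"
          from PN[OF this] show "\<alpha> \<in> ?Q' \<union> uminus ` ?Q'"
          proof
            assume "\<alpha> \<in> P" then show ?thesis using QPhi_iff by blast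
          next
            assume "\<alpha> \<in> N"
            then have "- \<alpha> \<in> ?Q'" using N_negP QPhi_iff by blast
            then have "- (- \<alpha>) \<in> uminus ` ?Q'" by (rule imageI)
            then show ?thesis by simp
          qed
        qed
      qed
    qed
    have pB: "\<phi> \<in> B" using phi Phi_iff by blast
    have "- \<phi> \<in> ?Q'"
    proof -
      have "- \<phi> \<in> N" using pB BP P_negN by blast
      moreover have "\<forall>\<psi>\<in>\<Phi>s. co (- \<phi>) \<psi> = 0" using phi co_neg co_basis[OF pB] by auto
      ultimately show ?thesis using QPhi_iff by blast
    qed
    moreover have "- \<phi> \<notin> Q" using phi Phi_iff by blast
    ultimately have "Q \<subset> ?Q'" using part1 by blast
    then show False using lev par part3 unfolding levi_nondegenerate_def by blast
  qed
next
  assume sP: "s ` \<Phi> \<subseteq> P"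
  then have eq: "\<Phi>s = \<Phi>" by auto
  show "levi_nondegenerate R Q s"
    unfolding levi_nondegenerate_def
  proof
    assume "\<exists>Q'. parabolic_subset R Q' \<and> Q \<subset> Q' \<and> Q' \<subseteq> Q \<union> s ` Q"
    then obtain Q' where "parabolic_subset R Q'" "Q \<subset> Q'" "Q' \<subseteq> Q \<union> s ` Q" by blast
    then have "Q' \<subseteq> Q_Phi R C \<Phi>" using part4[of Q'] eq unfolding parabolic_subset_def by auto
    then show False using QPhi_sub \<open>Q \<subset> Q'\<close> by blast
  qed
qed

lemma part6: "s ` \<Phi> \<subseteq> P \<longleftrightarrow> s ` \<Phi> \<subseteq> nilpotent_part Q"
proof
  assume sP: "s ` \<Phi> \<subseteq> P"
  show "s ` \<Phi> \<subseteq> nilpotent_part Q"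
  proof
    fix x assume "x \<in> s ` \<Phi>"
    then obtain \<phi> where "\<phi> \<in> \<Phi>" "x = s \<phi>" by blast
    then show "x \<in> nilpotent_part Q" using M sP PQ unfolding nilpotent_part_def by blast
  qed
next
  assume h: "s ` \<Phi> \<subseteq> nilpotent_part Q"
  show "s ` \<Phi> \<subseteq> P"
  proof
    fix x assume "x \<in> s ` \<Phi>"
    then have x: "x \<in> Q" "- x \<notin> Q" using h unfolding nilpotent_part_def by auto
    then have "x \<in> R" using QR by blast
    from PN[OF this] show "x \<in> P"
    proof
      assume "x \<in> N"
      then have "- x \<in> P" using N_negP by blast
      then show ?thesis using x PQ by blast
    qed
  qed
qed

end

theorem theorem4p30:
  fixes R Q C :: "'a::euclidean_space set" and s :: "'a \<Rightarrow> 'a"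
  assumes "reduced_root_system R"
    and "parabolic_subset R Q"
    and "root_involution R s"
    and "V_fit R Q s C"
  defines "\<Phi>sp \<equiv> {\<alpha>\<in>Phi_C R Q C. s \<alpha> \<in> pos_roots R C}"
  shows "closed_subset R (Q_Phi R C \<Phi>sp) \<and> Q \<subseteq> Q_Phi R C \<Phi>sp \<and>
           Q_Phi R C \<Phi>sp \<subseteq> Q \<union> s ` Q \<and>
           (\<forall>Q'. closed_subset R Q' \<and> Q \<subseteq> Q' \<and> Q' \<subseteq> Q \<union> s ` Q \<longrightarrow>
                 Q' \<subseteq> Q_Phi R C \<Phi>sp) \<and>
         (levi_nondegenerate R Q s \<longleftrightarrow> s ` Phi_C R Q C \<subseteq> pos_roots R C) \<and>
         (s ` Phi_C R Q C \<subseteq> pos_roots R C \<longleftrightarrow> s ` Phi_C R Q C \<subseteq> nilpotent_part Q)"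
proof -
  interpret thm_setup R C Q s
    using assms(1-4) by unfold_locales (auto simp: V_fit_def admissible_def)
  show ?thesis unfolding \<Phi>sp_def
  proof (intro conjI allI impI)
    show "closed_subset R (Q_Phi R C \<Phi>s)" by (rule QPhi_closed)
    show "Q \<subseteq> Q_Phi R C \<Phi>s" by (rule part1)
    show "Q_Phi R C \<Phi>s \<subseteq> Q \<union> s ` Q" by (rule part3)
    fix Q' assume "closed_subset R Q' \<and> Q \<subseteq> Q' \<and> Q' \<subseteq> Q \<union> s ` Q"
    then show "Q' \<subseteq> Q_Phi R C \<Phi>s" using part4 by blast
  next
    show "levi_nondegenerate R Q s \<longleftrightarrow> s ` \<Phi> \<subseteq> P" by (rule part5)
    show "s ` \<Phi> \<subseteq> P \<longleftrightarrow> s ` \<Phi> \<subseteq> nilpotent_part Q" by (rule part6)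
  qed
qed

end
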